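(* Let $0<k<n$ and let $\omega=(c_1,\dots,c_n)\in\{0,1\}^n$ with exactly $k$ ones, viewed as a weight in the Weyl orbit $W\omega_k$. Let $l_1<l_2<\dots<l_q$ be the indices $j\in\{1,\dots,n-1\}$ with $c_j-c_{j+1}=-1$ and $r_1<r_2<\dots<r_p$ the indices $j\in\{1,\dots,n-1\}$ with $c_j-c_{j+1}=1$ (so $\omega=\sum_i\omega_{r_i}-\sum_i\omega_{l_i}$, and the two sequences interlace). Assume $r_1<l_1<r_2<l_2<\cdots$ (so $q\in\{p-1,p\}$). Define integers recursively by $f(r_1)=r_1$, $f(l_i)=l_i-f(r_i)$, $f(r_{i+1})=r_{i+1}-f(l_i)$. Then: (1) $0<f(r_i)\le r_i$ and $0<f(l_i)<l_i$ for all $i$; in particular all these labels lie in $\{1,\dots,n-1\}$. (2) Let $D$ be the directed labelled graph with vertices $A,R_1,\dots,R_p,L_1,\dots,L_q$ and edges $A\to R_1$ labelled $r_1$, $R_i\to R_{i+1}$ labelled $r_{i+1}$, $A\to L_1$ labelled $l_1$, $L_i\to L_{i+1}$ labelled $l_{i+1}$, $R_i\to L_i$ labelled $f(l_i)$ ($1\le i\le q$), and $L_i\to R_{i+1}$ labelled $f(r_{i+1})$ ($1\le i\le p-1$). Then the paths $A,R_1,\dots,R_p$ and $A,L_1,\dots,L_q$ are geodesics (of lengths $\sum_i\omega_{r_i}$ and $\sum_i\omega_{l_i}$ respectively), and $D$ has coherent geodesics at $A$ (every pair $(A,v)$ has coherent geodesics). The same conclusions hold in the case $l_1<r_1<l_2<r_2<\cdots$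 for the graph obtained by the same rules with the roles of $(l_i,L_i)$ and $(r_i,R_i)$ interchanged.
   Context: Weights of $\mathrm{SL}_n$ are identified with $\mathbb{Z}^n/\mathbb{Z}(1,\dots,1)$; $\omega_i=e_1+\dots+e_i$, with $\omega_0=0$ and indices mod $n$; the Weyl group $W=S_n$ permutes coordinates; weights are partially ordered by $\mu\le\nu$ iff $\nu-\mu$ is a nonnegative integer combination of positive roots. In a directed graph with edges labelled by $\{0,\dots,n-1\}$, a path may traverse edges in either direction; its length is the sum over its edges of $\omega_a$ (edge labelled $a$ traversed along its direction) or $\omega_{n-a}$ (traversed against it). A geodesic between two vertices is a path between them of minimal length (no path between them has strictly smaller length); a pair $(a,b)$ has coherent geodesics if all geodesics between $a$ and $b$ have the same length. (The graph $D$ is the dual graph of the length-one "triangular diagram" web $T_\omega$ with vertex $A$.) *)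

theory Defs
  imports Main
begin

(* Weights of SL_n: integer vectors indexed by coordinates 1..n (values at other
   indices are irrelevant), considered modulo Z(1,...,1). *)

text \<open>Fundamental weight omega_j = e_1 + ... + e_j, index taken mod n (omega_0 = omega_n = 0).\<close>
definition omega :: "nat \<Rightarrow> nat \<Rightarrow> nat \<Rightarrow> int" where
  "omega n j = (\<lambda>i. if 1 \<le> i \<and> i \<le> j mod n then 1 else 0)"

definition weq :: "nat \<Rightarrow> (nat \<Rightarrow> int) \<Rightarrow> (nat \<Rightarrow> int) \<Rightarrow> bool" where
  "weq n \<mu> \<nu> \<longleftrightarrow> (\<exists>t::int. \<forall>i\<in>{1..n}. \<nu> i - \<mu> i = t)"

text \<open>mu <= nu iff nu - mu is (modulo Z(1,...,1)) a nonnegative integer combination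
  of the positive roots e_i - e_j (1 <= i < j <= n); c i j is the coefficient of e_i - e_j.\<close>
definition wle :: "nat \<Rightarrow> (nat \<Rightarrow> int) \<Rightarrow> (nat \<Rightarrow> int) \<Rightarrow> bool" where
  "wle n \<mu> \<nu> \<longleftrightarrow> (\<exists>(t::int) (c::nat \<Rightarrow> nat \<Rightarrow> nat). \<forall>i\<in>{1..n}.
      \<nu> i - \<mu> i = t + (\<Sum>j\<in>{i<..n}. int (c i j)) - (\<Sum>j\<in>{1..<i}. int (c j i)))"

definition wless :: "nat \<Rightarrow> (nat \<Rightarrow> int) \<Rightarrow> (nat \<Rightarrow> int) \<Rightarrow> bool" where
  "wless n \<mu> \<nu> \<longleftrightarrow> wle n \<mu> \<nu> \<and> \<not> weq n \<mu> \<nu>"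

text \<open>A path is a list of steps (u, a, v, d): the edge (u,a,v) traversed along its direction
  (d = True, from u to v) or against it (d = False, from v to u).\<close>
fun is_path :: "('v \<times> nat \<times> 'v) set \<Rightarrow> 'v \<Rightarrow> ('v \<times> nat \<times> 'v \<times> bool) list \<Rightarrow> 'v \<Rightarrow> bool" where
  "is_path E s [] t = (s = t)"
| "is_path E s ((u, a, v, d) # ps) t =
     ((u, a, v) \<in> E \<and> (if d then s = u \<and> is_path E v ps t else s = v \<and> is_path E u ps t))"

definition path_len :: "nat \<Rightarrow> ('v \<times> nat \<times> 'v \<times> bool) list \<Rightarrow> nat \<Rightarrow> int" where
  "path_len n ps = (\<lambda>i. sum_list (map (\<lambda>(u, a, v, d). omega n (if d then a else n - a mod n) i) ps))"

definition geodesic :: "nat \<Rightarrow> ('v \<times> nat \<times> 'v) set \<Rightarrow> 'v \<Rightarrow> 'v \<Rightarrow> ('v \<times> nat \<times> 'v \<times> bool) list \<Rightarrow> bool" where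
  "geodesic n E s t ps \<longleftrightarrow> is_path E s ps t \<and>
     \<not> (\<exists>qs. is_path E s qs t \<and> wless n (path_len n qs) (path_len n ps))"

definition coherent :: "nat \<Rightarrow> ('v \<times> nat \<times> 'v) set \<Rightarrow> 'v \<Rightarrow> 'v \<Rightarrow> bool" where
  "coherent n E s t \<longleftrightarrow> (\<forall>ps qs. geodesic n E s t ps \<and> geodesic n E s t qs \<longrightarrow>
       weq n (path_len n ps) (path_len n qs))"

text \<open>Vertices of D: A, R_1.., L_1.. (0-based: VR i is R_{i+1}).\<close>
datatype vert = VA | VR nat | VL nat

text \<open>The recursion f, for the chain starting first (xs = x_1 < y_1 < x_2 < ...), 0-based:
  fX 0 = x_1, fY i = y_i - fX i, fX (i+1) = x_{i+1} - fY i.\<close>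
primrec fX :: "nat list \<Rightarrow> nat list \<Rightarrow> nat \<Rightarrow> int" where
  "fX xs ys 0 = int (xs ! 0)"
| "fX xs ys (Suc i) = int (xs ! Suc i) - (int (ys ! i) - fX xs ys i)"

definition fY :: "nat list \<Rightarrow> nat list \<Rightarrow> nat \<Rightarrow> int" where
  "fY xs ys i = int (ys ! i) - fX xs ys i"

definition dgraph :: "(nat \<Rightarrow> vert) \<Rightarrow> (nat \<Rightarrow> vert) \<Rightarrow> nat list \<Rightarrow> nat list \<Rightarrow> (vert \<times> nat \<times> vert) set" where
  "dgraph X Y xs ys =
     {(VA, xs ! 0, X 0) | _::unit. 0 < length xs}
   \<union> {(X i, xs ! Suc i, X (Suc i)) | i. Suc i < length xs}
   \<union> {(VA, ys ! 0, Y 0) | _::unit. 0 < length ys}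
   \<union> {(Y i, ys ! Suc i, Y (Suc i)) | i. Suc i < length ys}
   \<union> {(X i, nat (fY xs ys i), Y i) | i. i < length ys}
   \<union> {(Y i, nat (fX xs ys (Suc i)), X (Suc i)) | i. Suc i < length xs}"

definition chain_path :: "(nat \<Rightarrow> vert) \<Rightarrow> nat list \<Rightarrow> (vert \<times> nat \<times> vert \<times> bool) list" where
  "chain_path X xs = map (\<lambda>i. (if i = 0 then VA else X (i - 1), xs ! i, X i, True)) [0..<length xs]"

definition chain_end :: "(nat \<Rightarrow> vert) \<Rightarrow> nat \<Rightarrow> vert" where
  "chain_end X m = (if m = 0 then VA else X (m - 1))"

end

theory Submission
  imports Defs
begin


definition Pn :: "nat \<Rightarrow> (nat \<Rightarrow> int) \<Rightarrow> bool" where "Pn n d \<longleftrightarrow> wle n (\<lambda>_. 0) d"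

lemma wle_Pn: "wle n \<mu> \<nu> \<longleftrightarrow> Pn n (\<lambda>i. \<nu> i - \<mu> i)"
  by (simp add: Pn_def wle_def)

lemma Pn_add: assumes "Pn n d1" "Pn n d2" shows "Pn n (\<lambda>i. d1 i + d2 i)"
proof -
  from assms obtain t1 c1 t2 c2 where
    1: "\<forall>i\<in>{1..n}. d1 i - 0 = t1 + (\<Sum>j\<in>{i<..n}. int (c1 i j)) - (\<Sum>j\<in>{1..<i}. int (c1 j i))" and
    2: "\<forall>i\<in>{1..n}. d2 i - 0 = t2 + (\<Sum>j\<in>{i<..n}. int (c2 i j)) - (\<Sum>j\<in>{1..<i}. int (c2 j i))"
    unfolding Pn_def wle_def by blast
  show ?thesis unfolding Pn_def wle_def
    apply (rule exI[of _ "t1+t2"], rule exI[of _ "\<lambda>i j. c1 i j + c2 i j"])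
    using 1 2 by (auto simp: sum.distrib)
qed

lemma Pn_cong: assumes "Pn n d" "\<forall>i\<in>{1..n}. d i = d' i" shows "Pn n d'"
  using assms unfolding Pn_def wle_def by auto

lemma Pn_from_partial:
  assumes ps: "\<forall>m\<in>{1..n}. 0 \<le> (\<Sum>i=1..m. d i - t)" and tot: "(\<Sum>i=1..n. d i - t) = 0"
  shows "Pn n d"
proof -
  define S where "S m = (\<Sum>i=1..m. d i - t)" for m
  define c where "c i j = (if j = Suc i then nat (S i) else 0)" for i j
  have S0: "S 0 = 0" by (simp add: S_def)
  have SS: "S (Suc m) = S m + (d (Suc m) - t)" for m by (simp add: S_def)
  have Snn: "m \<le> n \<Longrightarrow> 0 \<le> S m" for m using ps S0 unfolding S_def[symmetric]
    by (cases m) auto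
  have Sn: "S n = 0" using tot by (simp add: S_def)
  have a: "(\<Sum>j\<in>{i<..n}. int (c i j)) = (if i < n then S i else 0)" if "i \<le> n" for i
  proof -
    have "(\<Sum>j\<in>{i<..n}. int (c i j)) = (\<Sum>j\<in>{i<..n}. if j = Suc i then S i else 0)"
      using Snn that by (intro sum.cong) (auto simp: c_def)
    also have "\<dots> = (if i < n then S i else 0)" by (simp add: sum.delta)
    finally show ?thesis .
  qed
  have b: "(\<Sum>j\<in>{1..<i}. int (c j i)) = S (i - 1)" if "1 \<le> i" "i \<le> n" for i
  proof -
    have "(\<Sum>j\<in>{1..<i}. int (c j i)) = (\<Sum>j\<in>{1..<i}. if j = i - 1 then S (i - 1) else 0)"
      using Snn that by (intro sum.cong) (auto simp: c_def)
    also have "\<dots> = S (i - 1)" using S0 by (simp add: sum.delta)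
    finally show ?thesis .
  qed
  show ?thesis unfolding Pn_def wle_def
  proof (rule exI[of _ t], rule exI[of _ c], intro ballI)
    fix i assume i: "i \<in> {1..n}"
    then obtain m where m: "i = Suc m" by (cases i) auto
    show "d i - 0 = t + (\<Sum>j\<in>{i<..n}. int (c i j)) - (\<Sum>j\<in>{1..<i}. int (c j i))"
      using a[of i] b[of i] i SS[of m] Sn m by auto
  qed
qed

lemma swap_tri: "(\<Sum>i=1..(n::nat). \<Sum>j\<in>{1..<i}. g j i) = (\<Sum>i=1..n. \<Sum>j\<in>{i<..n}. (g i j :: int))"
proof -
  have "(\<Sum>i=1..n. \<Sum>j\<in>{1..<i}. g j i) = (\<Sum>i\<in>{1..n}. \<Sum>j\<in>{j. j\<in>{1..n} \<and> j < i}. g j i)"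
    by (intro sum.cong refl) auto
  also have "\<dots> = (\<Sum>j\<in>{1..n}. \<Sum>i\<in>{i. i\<in>{1..n} \<and> j < i}. g j i)"
    by (rule sum.swap_restrict) auto
  also have "\<dots> = (\<Sum>i=1..n. \<Sum>j\<in>{i<..n}. g i j)"
    by (intro sum.cong) auto
  finally show ?thesis .
qed

lemma weighted: fixes n :: nat shows
  "(\<Sum>i=1..n. w i * ((\<Sum>j\<in>{i<..n}. int (c i j)) - (\<Sum>j\<in>{1..<i}. int (c j i))))
   = (\<Sum>i=1..n. \<Sum>j\<in>{i<..n}. int (c i j) * (w i - w j))"
proof -
  have "(\<Sum>i=1..n. w i * ((\<Sum>j\<in>{i<..n}. int (c i j)) - (\<Sum>j\<in>{1..<i}. int (c j i))))
     = (\<Sum>i=1..n. \<Sum>j\<in>{i<..n}. w i * int (c i j)) - (\<Sum>i=1..n. \<Sum>j\<in>{1..<i}. w i * int (c j i))"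
    by (simp add: right_diff_distrib sum_distrib_left sum_subtractf)
  also have "(\<Sum>i=1..n. \<Sum>j\<in>{1..<i}. w i * int (c j i)) = (\<Sum>i=1..n. \<Sum>j\<in>{i<..n}. w j * int (c i j))"
    using swap_tri[where g="\<lambda>j i. w i * int (c j i)" and n=n] by simp
  finally show ?thesis
    by (simp add: sum_subtractf[symmetric] algebra_simps)
qed

lemma Pn_antisym: assumes n: "0 < n" and "Pn n d" "Pn n (\<lambda>i. - d i)"
  shows "\<exists>t. \<forall>i\<in>{1..n}. d i = t"
proof -
  define F where "F c i = (\<Sum>j\<in>{i<..n}. int (c i j)) - (\<Sum>j\<in>{1..<i}. int (c j i))" for c :: "nat \<Rightarrow> nat \<Rightarrow> nat" and i
  from assms obtain t c t' c' where
    1: "\<forall>i\<in>{1..n}. d i = t + F c i" and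
    2: "\<forall>i\<in>{1..n}. - d i = t' + F c' i"
    unfolding Pn_def wle_def F_def by (auto simp: algebra_simps)
  define cc where "cc i j = c i j + c' i j" for i j
  have Fcc: "F cc i = F c i + F c' i" for i by (simp add: F_def cc_def sum.distrib)
  have z: "\<forall>i\<in>{1..n}. (t + t') + F cc i = 0" using 1 2 Fcc by force
  have w1: "(\<Sum>i=1..n. F cc i) = 0"
    using weighted[where n=n and w="\<lambda>_. 1" and c=cc] by (simp add: F_def)
  have "(\<Sum>i=1..n. F cc i) = (\<Sum>i=1..n. - (t + t'))"
  proof (intro sum.cong refl)
    fix i assume "i \<in> {1..n}"
    then have "(t + t') + F cc i = 0" using z by blast
    then show "F cc i = - (t + t')" by linarith
  qed
  then have "(\<Sum>i=1..n. F cc i) = - (int n * (t + t'))" by (simp add: algebra_simps)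
  then have "int n * (t + t') = 0" using w1 by linarith
  then have tt: "t + t' = 0" using n by (metis mult_eq_0_iff of_nat_0_less_iff less_irrefl)
  have Fz: "\<forall>i\<in>{1..n}. F cc i = 0" using z tt by auto
  have "(\<Sum>i=1..n. int i * F cc i) = 0" using Fz by simp
  then have "(\<Sum>i=1..n. \<Sum>j\<in>{i<..n}. int (cc i j) * (int i - int j)) = 0"
    using weighted[where n=n and w=int and c=cc] by (simp add: F_def)
  moreover have "(\<Sum>i=1..n. \<Sum>j\<in>{i<..n}. int (cc i j) * (int j - int i)) = - (\<Sum>i=1..n. \<Sum>j\<in>{i<..n}. int (cc i j) * (int i - int j))"
    by (simp add: sum_negf[symmetric] algebra_simps)
  ultimately have "(\<Sum>i=1..n. \<Sum>j\<in>{i<..n}. int (cc i j) * (int j - int i)) = 0"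
    by simp
  then have "\<forall>i\<in>{1..n}. (\<Sum>j\<in>{i<..n}. int (cc i j) * (int j - int i)) = 0"
    by (subst (asm) sum_nonneg_eq_0_iff) (auto intro!: sum_nonneg)
  then have "\<forall>i\<in>{1..n}. \<forall>j\<in>{i<..n}. int (cc i j) * (int j - int i) = 0"
    by (subst (asm) sum_nonneg_eq_0_iff) auto
  then have c0: "\<And>i j. 1 \<le> i \<Longrightarrow> i < j \<Longrightarrow> j \<le> n \<Longrightarrow> c i j = 0"
    by (force simp: cc_def)
  have "\<forall>i\<in>{1..n}. F c i = 0" unfolding F_def using c0
    by (auto intro!: sum.neutral)
  then show ?thesis using 1 by auto
qed

lemma omega_ind: "a < n \<Longrightarrow> omega n a k = (if k \<in> {1..a} then 1 else 0)"
  by (simp add: omega_def)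

lemma sum_ind: "finite A \<Longrightarrow> (\<Sum>i\<in>A. if i \<in> B then (1::int) else 0) = int (card (A \<inter> B))"
  by (simp add: sum.If_cases)

lemma sum_omega: assumes "a < n" shows "(\<Sum>i=1..m. omega n a i) = int (min m a)"
proof -
  have "(\<Sum>i=1..m. omega n a i) = (\<Sum>i\<in>{1..m}. if i \<in> {1..a} then 1 else 0)"
    using omega_ind[OF assms] by (intro sum.cong) auto
  also have "\<dots> = int (card ({1..m} \<inter> {1..a}))" by (rule sum_ind) simp
  also have "{1..m} \<inter> {1..a} = {1..min m a}" by auto
  finally show ?thesis by simp
qed

lemma sum_indS: "(\<Sum>i=1..(m::nat). (if i \<in> S then 1 else 0)) = int (card ({1..m} \<inter> S))"
  by (rule sum_ind) simp

definition good :: "nat \<Rightarrow> nat \<Rightarrow> (nat \<Rightarrow> int) \<Rightarrow> (nat \<Rightarrow> int) \<Rightarrow> bool" where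
  "good n a f g \<longleftrightarrow> 0 < a \<and> a < n \<and> (\<exists>S. S \<subseteq> {1..n} \<and> card S = a \<and> (\<forall>k. g k - f k = (if k \<in> S then 1 else 0)))"

lemma good_Pn: assumes "good n a f g"
  shows "Pn n (\<lambda>k. omega n a k - (g k - f k))" "Pn n (\<lambda>k. omega n (n - a mod n) k - (f k - g k))"
proof -
  obtain S where a: "0 < a" "a < n" and S: "S \<subseteq> {1..n}" "card S = a" and d: "\<forall>k. g k - f k = (if k \<in> S then 1 else 0)"
    using assms unfolding good_def by auto
  have fS: "finite S" using S finite_subset by blast
  have amod: "a mod n = a" using a by simp
  have nam: "n - a < n" using a by simp
  show "Pn n (\<lambda>k. omega n a k - (g k - f k))"
  proof (rule Pn_from_partial[where t=0])
    have e: "(\<Sum>i=1..m. omega n a i - (g i - f i) - 0) = int (card ({1..m} \<inter> {1..a})) - int (card ({1..m} \<inter> S))" for m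
      using sum_omega[OF a(2), of m] sum_indS[where m=m and S=S] by (simp add: d sum_subtractf)
    have "card ({1..m} \<inter> S) \<le> card {1..m}" for m by (rule card_mono) auto
    moreover have "card ({1..m} \<inter> S) \<le> card S" for m by (rule card_mono[OF fS]) auto
    moreover have "card ({1..m} \<inter> {1..a}) = min m a" for m
    proof -
      have "{1..m} \<inter> {1..a} = {1..min m a}" by auto
      then show ?thesis by simp
    qed
    ultimately have "0 \<le> int (card ({1..m} \<inter> {1..a})) - int (card ({1..m} \<inter> S))" for m
      using S by (simp add: min_def)
    then show "\<forall>m\<in>{1..n}. 0 \<le> (\<Sum>i=1..m. omega n a i - (g i - f i) - 0)"
      unfolding e by blast
    have "{1..n} \<inter> {1..a} = {1..a}" "{1..n} \<inter> S = S" using a S by auto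
    then show "(\<Sum>i=1..n. omega n a i - (g i - f i) - 0) = 0" unfolding e using S a by simp
  qed
  show "Pn n (\<lambda>k. omega n (n - a mod n) k - (f k - g k))"
  proof (rule Pn_from_partial[where t=1])
    have e: "(\<Sum>i=1..m. omega n (n - a mod n) i - (f i - g i) - 1) = int (card ({1..m} \<inter> {1..n-a})) + int (card ({1..m} \<inter> S)) - int m" for m
    proof -
      have "(\<Sum>i=1..m. f i - g i) = - (\<Sum>i=1..m. if i\<in>S then 1 else 0)"
        by (simp add: sum_negf[symmetric], rule sum.cong, simp_all add: d[rule_format, symmetric])
      then show ?thesis
        using sum_omega[OF nam, of m] sum_indS[where m=m and S=S] by (simp add: amod sum_subtractf)
    qed
    have c1: "card ({1..m} \<inter> {1..n-a}) = min m (n-a)" for m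
    proof -
      have "{1..m} \<inter> {1..n-a} = {1..min m (n-a)}" by auto
      then show ?thesis by simp
    qed
    have c2: "card ({1..m} \<inter> S) + card ({1..m} - S) = m" for m
      using card_Int_Diff[of "{1..m}" S] by simp
    have c3: "m \<le> n \<Longrightarrow> card ({1..m} - S) \<le> n - a" for m
    proof -
      assume "m \<le> n"
      then have "card ({1..m} - S) \<le> card ({1..n} - S)" by (intro card_mono) auto
      also have "\<dots> = n - a" using S fS by (simp add: card_Diff_subset)
      finally show ?thesis .
    qed
    show "\<forall>m\<in>{1..n}. 0 \<le> (\<Sum>i=1..m. omega n (n - a mod n) i - (f i - g i) - 1)"
    proof
      fix m assume "m \<in> {1..n}"
      then show "0 \<le> (\<Sum>i=1..m. omega n (n - a mod n) i - (f i - g i) - 1)"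
        unfolding e using c1[of m] c2[of m] c3[of m] by simp
    qed
    show "(\<Sum>i=1..n. omega n (n - a mod n) i - (f i - g i) - 1) = 0"
      using c1[of n] c2[of n] c3[of n] S a
      unfolding e by (simp add: Int_absorb1)
  qed
qed



lemma path_bound:
  assumes good: "\<forall>(u,a,v)\<in>E. good n a (h u) (h v)"
  shows "is_path E s ps t \<Longrightarrow> Pn n (\<lambda>k. path_len n ps k - (h t k - h s k))"
proof (induction ps arbitrary: s)
  case Nil
  then show ?case unfolding Pn_def wle_def path_len_def
    by (intro exI[of _ 0] exI[of _ "\<lambda>_ _. 0"]) auto
next
  case (Cons e ps)
  obtain u a v d where e: "e = (u,a,v,d)" by (cases e) auto
  have pl: "path_len n (e # ps) k = omega n (if d then a else n - a mod n) k + path_len n ps k" for k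
    by (simp add: path_len_def e)
  show ?case
  proof (cases d)
    case True
    with Cons.prems e have E: "(u,a,v) \<in> E" "s = u" "is_path E v ps t" by auto
    have g: "good n a (h u) (h v)" using good E by auto
    have "Pn n (\<lambda>k. (omega n a k - (h v k - h u k)) + (path_len n ps k - (h t k - h v k)))"
      by (rule Pn_add[OF good_Pn(1)[OF g] Cons.IH[OF E(3)]])
    then show ?thesis by (rule Pn_cong) (auto simp: pl True E(2))
  next
    case False
    with Cons.prems e have E: "(u,a,v) \<in> E" "s = v" "is_path E u ps t" by auto
    have g: "good n a (h u) (h v)" using good E by auto
    have "Pn n (\<lambda>k. (omega n (n - a mod n) k - (h u k - h v k)) + (path_len n ps k - (h t k - h u k)))"
      by (rule Pn_add[OF good_Pn(2)[OF g] Cons.IH[OF E(3)]])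
    then show ?thesis by (rule Pn_cong) (auto simp: pl False E(2))
  qed
qed

lemma geo_coh:
  assumes n: "0 < n" and good: "\<forall>(u,a,v)\<in>E. good n a (h u) (h v)"
    and cp: "is_path E s cp v" and len: "\<forall>k. path_len n cp k = h v k - h s k"
  shows "geodesic n E s v cp \<and> coherent n E s v"
proof -
  have lb: "wle n (path_len n cp) (path_len n qs)" if "is_path E s qs v" for qs
    using path_bound[OF good that] unfolding wle_Pn
    by (rule Pn_cong) (auto simp: len)
  have geo: "geodesic n E s v cp"
    unfolding geodesic_def
  proof (intro conjI cp notI)
    assume "\<exists>qs. is_path E s qs v \<and> wless n (path_len n qs) (path_len n cp)"
    then obtain qs where q: "is_path E s qs v" "wle n (path_len n qs) (path_len n cp)"
      "\<not> weq n (path_len n qs) (path_len n cp)" unfolding wless_def by auto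
    have "Pn n (\<lambda>k. path_len n cp k - path_len n qs k)" using q(2) by (simp add: wle_Pn)
    moreover have "Pn n (\<lambda>k. - (path_len n cp k - path_len n qs k))"
      using lb[OF q(1)] unfolding wle_Pn by (rule Pn_cong) auto
    ultimately obtain t where "\<forall>k\<in>{1..n}. path_len n cp k - path_len n qs k = t"
      using Pn_antisym[OF n] by blast
    then show False using q(3) unfolding weq_def by blast
  qed
  have "weq n (path_len n cp) (path_len n ps)" if "geodesic n E s v ps" for ps
  proof (rule ccontr)
    assume "\<not> ?thesis"
    moreover have "is_path E s ps v" using that unfolding geodesic_def by auto
    ultimately have "wless n (path_len n cp) (path_len n ps)" using lb unfolding wless_def by auto
    then show False using that cp unfolding geodesic_def by auto
  qed
  note W = this
  have "coherent n E s v"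
    unfolding coherent_def
  proof (intro allI impI)
    fix ps qs assume "geodesic n E s v ps \<and> geodesic n E s v qs"
    then obtain t1 t2 where t1: "\<forall>i\<in>{1..n}. path_len n ps i - path_len n cp i = t1"
      and t2: "\<forall>i\<in>{1..n}. path_len n qs i - path_len n cp i = t2"
      using W unfolding weq_def by blast
    show "weq n (path_len n ps) (path_len n qs)" unfolding weq_def
    proof (intro exI[of _ "t2 - t1"] ballI)
      fix i assume "i \<in> {1..n}"
      with t1 t2 show "path_len n qs i - path_len n ps i = t2 - t1" by force
    qed
  qed
  with geo show ?thesis by auto
qed



definition hsum :: "nat \<Rightarrow> nat list \<Rightarrow> nat \<Rightarrow> nat \<Rightarrow> int" where
  "hsum n xs i = (\<lambda>k. \<Sum>j<Suc i. omega n (xs ! j) k)"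

lemma hsum_split: "hsum n xs i k = (if i = 0 then 0 else hsum n xs (i - 1) k) + omega n (xs ! i) k"
  by (cases i) (simp_all add: hsum_def)

lemma chain_ind:
  assumes A1: "\<forall>i<length xs. 1 \<le> xs!i \<and> xs!i < n"
    and A2: "\<forall>i<length ys. ys!i < n"
    and A3: "\<forall>i<length ys. xs!i < ys!i"
    and A4: "\<forall>i. Suc i < length xs \<longrightarrow> i < length ys \<and> ys!i < xs!(Suc i)"
    and A5: "length ys \<le> length xs"
  shows "(i < length xs \<longrightarrow> (\<exists>T. T \<subseteq> {1..xs!i} \<and> int (card T) = fX xs ys i \<and> 1 \<le> fX xs ys i \<and>
            (\<forall>k. hsum n xs i k - (if i = 0 then 0 else hsum n ys (i - 1) k) = (if k \<in> T then 1 else 0)))) \<and>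
         (i < length ys \<longrightarrow> (\<exists>S. S \<subseteq> {1..ys!i} \<and> int (card S) = fY xs ys i \<and> 1 \<le> fY xs ys i \<and>
            (\<forall>k. hsum n ys i k - hsum n xs i k = (if k \<in> S then 1 else 0))))"
proof -
  have BC: "i < length ys \<Longrightarrow> (\<exists>S. S \<subseteq> {1..ys!i} \<and> int (card S) = fY xs ys i \<and> 1 \<le> fY xs ys i \<and>
            (\<forall>k. hsum n ys i k - hsum n xs i k = (if k \<in> S then 1 else 0)))"
    if B: "i < length xs \<longrightarrow> (\<exists>T. T \<subseteq> {1..xs!i} \<and> int (card T) = fX xs ys i \<and> 1 \<le> fX xs ys i \<and>
            (\<forall>k. hsum n xs i k - (if i = 0 then 0 else hsum n ys (i - 1) k) = (if k \<in> T then 1 else 0)))" for i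
  proof -
    assume iq: "i < length ys"
    then have ip: "i < length xs" using A5 by simp
    obtain T where T: "T \<subseteq> {1..xs!i}" "int (card T) = fX xs ys i" "1 \<le> fX xs ys i"
      "\<forall>k. hsum n xs i k - (if i = 0 then 0 else hsum n ys (i - 1) k) = (if k \<in> T then 1 else 0)"
      using B ip by blast
    have lt: "xs!i < ys!i" "ys!i < n" using A3 A2 iq by auto
    define S where "S = {1..ys!i} - T"
    have TS: "T \<subseteq> {1..ys!i}" using T(1) lt by auto
    have cS: "card S = ys!i - card T" unfolding S_def using TS by (simp add: card_Diff_subset finite_subset)
    have cT: "card T \<le> xs!i" using T(1) card_mono[OF _ T(1)] by simp
    have fy: "fY xs ys i = int (ys!i) - fX xs ys i" by (simp add: fY_def)
    show ?thesis
    proof (intro exI[of _ S] conjI allI)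
      show "S \<subseteq> {1..ys!i}" by (auto simp: S_def)
      show "int (card S) = fY xs ys i" using cS fy T(2) cT lt by simp
      show "1 \<le> fY xs ys i" using fy T(2) cT lt by simp
      fix k
      have kT: "k \<in> T \<Longrightarrow> 1 \<le> k \<and> k \<le> ys!i" using TS by auto
        then show "hsum n ys i k - hsum n xs i k = (if k \<in> S then 1 else 0)"
        using T(4)[rule_format, of k] hsum_split[of n ys i k] omega_ind[OF lt(2), of k]
        by (auto simp: S_def split: if_splits)
    qed
  qed
  show ?thesis
  proof (induction i)
    case 0
    have B0: "0 < length xs \<longrightarrow> (\<exists>T. T \<subseteq> {1..xs!0} \<and> int (card T) = fX xs ys 0 \<and> 1 \<le> fX xs ys 0 \<and>
            (\<forall>k. hsum n xs 0 k - (if 0 = (0::nat) then 0 else hsum n ys (0 - 1) k) = (if k \<in> T then 1 else 0)))"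
    proof
      assume "0 < length xs"
      then have "1 \<le> xs!0" "xs!0 < n" using A1 by auto
      then show "\<exists>T. T \<subseteq> {1..xs!0} \<and> int (card T) = fX xs ys 0 \<and> 1 \<le> fX xs ys 0 \<and>
            (\<forall>k. hsum n xs 0 k - (if 0 = (0::nat) then 0 else hsum n ys (0 - 1) k) = (if k \<in> T then 1 else 0))"
        by (intro exI[of _ "{1..xs!0}"]) (simp add: hsum_def omega_ind)
    qed
    then show ?case using BC[OF B0] by blast
  next
    case (Suc i)
    have BS: "Suc i < length xs \<longrightarrow> (\<exists>T. T \<subseteq> {1..xs!Suc i} \<and> int (card T) = fX xs ys (Suc i) \<and> 1 \<le> fX xs ys (Suc i) \<and>
            (\<forall>k. hsum n xs (Suc i) k - (if Suc i = 0 then 0 else hsum n ys (Suc i - 1) k) = (if k \<in> T then 1 else 0)))"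
    proof
      assume ip: "Suc i < length xs"
      then have iq: "i < length ys" and lt: "ys!i < xs!Suc i" using A4 by auto
      have lt2: "xs!Suc i < n" using A1 ip by auto
      obtain S where S: "S \<subseteq> {1..ys!i}" "int (card S) = fY xs ys i" "1 \<le> fY xs ys i"
        "\<forall>k. hsum n ys i k - hsum n xs i k = (if k \<in> S then 1 else 0)"
        using Suc.IH iq by blast
      define T where "T = {1..xs!Suc i} - S"
      have ST: "S \<subseteq> {1..xs!Suc i}" using S(1) lt by auto
      have cT: "card T = xs!Suc i - card S" unfolding T_def using ST by (simp add: card_Diff_subset finite_subset)
      have cS: "card S \<le> ys!i" using S(1) card_mono[OF _ S(1)] by simp
      have fx: "fX xs ys (Suc i) = int (xs ! Suc i) - fY xs ys i" by (simp add: fY_def)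
      show "\<exists>T. T \<subseteq> {1..xs!Suc i} \<and> int (card T) = fX xs ys (Suc i) \<and> 1 \<le> fX xs ys (Suc i) \<and>
            (\<forall>k. hsum n xs (Suc i) k - (if Suc i = 0 then 0 else hsum n ys (Suc i - 1) k) = (if k \<in> T then 1 else 0))"
      proof (intro exI[of _ T] conjI allI)
        show "T \<subseteq> {1..xs!Suc i}" by (auto simp: T_def)
        show "int (card T) = fX xs ys (Suc i)" using cT fx S(2) cS lt by simp
        show "1 \<le> fX xs ys (Suc i)" using fx S(2) cS lt by simp
        fix k
        show "hsum n xs (Suc i) k - (if Suc i = 0 then 0 else hsum n ys (Suc i - 1) k) = (if k \<in> T then 1 else 0)"
          using S(4)[rule_format, of k] hsum_split[of n xs "Suc i" k] omega_ind[OF lt2, of k] ST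
          by (auto simp: T_def split: if_splits)
      qed
    qed
    then show ?case using BC[OF BS] by blast
  qed
qed



lemma good_omega: "0 < a \<Longrightarrow> a < n \<Longrightarrow> (\<forall>k. g k - f k = omega n a k) \<Longrightarrow> good n a f g"
  unfolding good_def by (intro conjI exI[of _ "{1..a}"]) (auto simp: omega_ind)

lemma good_of: "S \<subseteq> {1..b} \<Longrightarrow> b < n \<Longrightarrow> int (card S) = z \<Longrightarrow> 1 \<le> z \<Longrightarrow>
   (\<forall>k. g k - f k = (if k \<in> S then 1 else 0)) \<Longrightarrow> good n (nat z) f g"
  unfolding good_def
proof (intro conjI exI[of _ S])
  assume "S \<subseteq> {1..b}" "b < n" "int (card S) = z" "1 \<le> z"
  moreover have "card S \<le> b" using \<open>S \<subseteq> {1..b}\<close> card_mono[of "{1..b}" S] by simp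
  ultimately show "0 < nat z" "nat z < n" "S \<subseteq> {1..n}" "card S = nat z" by auto
qed auto

definition cpm :: "(nat \<Rightarrow> vert) \<Rightarrow> nat list \<Rightarrow> nat \<Rightarrow> (vert \<times> nat \<times> vert \<times> bool) list" where
  "cpm X xs m = map (\<lambda>i. (if i = 0 then VA else X (i - 1), xs ! i, X i, True)) [0..<m]"

lemma is_path_snoc: "is_path E s ps w \<Longrightarrow> (w, a, v) \<in> E \<Longrightarrow> is_path E s (ps @ [(w, a, v, True)]) v"
  by (induction ps arbitrary: s) auto

lemma cpm_path:
  assumes "m \<le> length xs" and edges: "\<forall>i<length xs. (if i = 0 then VA else X (i - 1), xs!i, X i) \<in> E"
  shows "is_path E VA (cpm X xs m) (chain_end X m) \<and> (\<forall>k. path_len n (cpm X xs m) k = (\<Sum>j<m. omega n (xs!j) k))"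
  using assms(1)
proof (induction m)
  case 0
  then show ?case by (simp add: cpm_def chain_end_def path_len_def)
next
  case (Suc m)
  have c: "cpm X xs (Suc m) = cpm X xs m @ [(chain_end X m, xs!m, X m, True)]"
    by (simp add: cpm_def chain_end_def)
  have "(chain_end X m, xs!m, X m) \<in> E" using edges Suc.prems by (simp add: chain_end_def)
  then have "is_path E VA (cpm X xs (Suc m)) (X m)"
    unfolding c using Suc by (intro is_path_snoc) auto
  moreover have "path_len n (cpm X xs (Suc m)) k = (\<Sum>j<Suc m. omega n (xs!j) k)" for k
    using Suc by (simp add: c path_len_def)
  ultimately show ?case by (simp add: chain_end_def)
qed

lemma list_main:
  fixes xs ys :: "nat list" and X Y :: "nat \<Rightarrow> vert" and h :: "vert \<Rightarrow> nat \<Rightarrow> int"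
  assumes A1: "\<forall>i<length xs. 1 \<le> xs!i \<and> xs!i < n"
    and A2: "\<forall>i<length ys. ys!i < n"
    and A3: "\<forall>i<length ys. xs!i < ys!i"
    and A4: "\<forall>i. Suc i < length xs \<longrightarrow> i < length ys \<and> ys!i < xs!(Suc i)"
    and A5: "length ys \<le> length xs"
    and n0: "0 < n" and hA: "h VA = (\<lambda>_. 0)" and hX: "\<forall>i. h (X i) = hsum n xs i" and hY: "\<forall>i. h (Y i) = hsum n ys i"
  shows "let p = length xs; q = length ys; E = dgraph X Y xs ys in
      (\<forall>i<p. 0 < fX xs ys i \<and> fX xs ys i \<le> int (xs ! i) \<and> fX xs ys i \<in> {1..int n - 1}) \<and>
      (\<forall>i<q. 0 < fY xs ys i \<and> fY xs ys i < int (ys ! i) \<and> fY xs ys i \<in> {1..int n - 1}) \<and>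
      geodesic n E VA (chain_end X p) (chain_path X xs) \<and>
      weq n (path_len n (chain_path X xs)) (\<lambda>i. \<Sum>j<p. omega n (xs ! j) i) \<and>
      geodesic n E VA (chain_end Y q) (chain_path Y ys) \<and>
      weq n (path_len n (chain_path Y ys)) (\<lambda>i. \<Sum>j<q. omega n (ys ! j) i) \<and>
      (\<forall>v \<in> {VA} \<union> X ` {..<p} \<union> Y ` {..<q}. coherent n E VA v)"
proof -
  define p where "p = length xs"
  define q where "q = length ys"
  define E where "E = dgraph X Y xs ys"
  note CI = chain_ind[OF A1 A2 A3 A4 A5]
  have B: "\<exists>T. T \<subseteq> {1..xs!i} \<and> int (card T) = fX xs ys i \<and> 1 \<le> fX xs ys i \<and>
            (\<forall>k. hsum n xs i k - (if i = 0 then 0 else hsum n ys (i - 1) k) = (if k \<in> T then 1 else 0))"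
    if "i < p" for i using CI[of i] that p_def by blast
  have C: "\<exists>S. S \<subseteq> {1..ys!i} \<and> int (card S) = fY xs ys i \<and> 1 \<le> fY xs ys i \<and>
            (\<forall>k. hsum n ys i k - hsum n xs i k = (if k \<in> S then 1 else 0))"
    if "i < q" for i using CI[of i] that q_def by blast
  have ys1: "\<forall>i<length ys. 1 \<le> ys!i \<and> ys!i < n" using A1 A2 A3 A5 by fastforce
  have P1: "\<forall>i<p. 0 < fX xs ys i \<and> fX xs ys i \<le> int (xs ! i) \<and> fX xs ys i \<in> {1..int n - 1}"
  proof (intro allI impI)
    fix i assume i: "i < p"
    then obtain T where T: "T \<subseteq> {1..xs!i}" "int (card T) = fX xs ys i" "1 \<le> fX xs ys i" using B by blast
    have "card T \<le> xs!i" using T(1) card_mono[of "{1..xs!i}" T] by simp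
    moreover have "xs!i < n" using A1 i p_def by auto
    ultimately show "0 < fX xs ys i \<and> fX xs ys i \<le> int (xs ! i) \<and> fX xs ys i \<in> {1..int n - 1}"
      using T by auto
  qed
  have P2: "\<forall>i<q. 0 < fY xs ys i \<and> fY xs ys i < int (ys ! i) \<and> fY xs ys i \<in> {1..int n - 1}"
  proof (intro allI impI)
    fix i assume i: "i < q"
    then obtain S where S: "1 \<le> fY xs ys i" using C by blast
    have "i < p" using i A5 p_def q_def by simp
    then have "1 \<le> fX xs ys i" using P1 by auto
    moreover have "ys!i < n" using A2 i q_def by auto
    ultimately show "0 < fY xs ys i \<and> fY xs ys i < int (ys ! i) \<and> fY xs ys i \<in> {1..int n - 1}"
      using S by (auto simp: fY_def)
  qed
  have good: "\<forall>(u,a,v)\<in>E. good n a (h u) (h v)"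
  proof (intro ballI, clarify)
    fix u a v assume "(u, a, v) \<in> E"
    then consider
        (a1) "u = VA" "a = xs!0" "v = X 0" "0 < p"
      | (a2) i where "u = X i" "a = xs ! Suc i" "v = X (Suc i)" "Suc i < p"
      | (a3) "u = VA" "a = ys!0" "v = Y 0" "0 < q"
      | (a4) i where "u = Y i" "a = ys ! Suc i" "v = Y (Suc i)" "Suc i < q"
      | (a5) i where "u = X i" "a = nat (fY xs ys i)" "v = Y i" "i < q"
      | (a6) i where "u = Y i" "a = nat (fX xs ys (Suc i))" "v = X (Suc i)" "Suc i < p"
      unfolding E_def dgraph_def p_def q_def by blast
    then show "good n a (h u) (h v)"
    proof cases
      case a1 then show ?thesis using A1 p_def by (intro good_omega) (auto simp: hA hX hsum_def)
    next
      case (a2 i) then show ?thesis using A1 p_def by (intro good_omega) (auto simp: hA hX hsum_def)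
    next
      case a3 then show ?thesis using ys1 q_def by (intro good_omega) (auto simp: hA hY hsum_def)
    next
      case (a4 i) then show ?thesis using ys1 q_def by (intro good_omega) (auto simp: hA hY hsum_def)
    next
      case (a5 i)
      then obtain S where S: "S \<subseteq> {1..ys!i}" "int (card S) = fY xs ys i" "1 \<le> fY xs ys i"
            "\<forall>k. hsum n ys i k - hsum n xs i k = (if k \<in> S then 1 else 0)" using C by blast
      have "ys!i < n" using A2 a5 q_def by auto
      then show ?thesis using a5 good_of[OF S(1) _ S(2) S(3)] S(4) by (auto simp: hX hY)
    next
      case (a6 i)
      then obtain T where T: "T \<subseteq> {1..xs!Suc i}" "int (card T) = fX xs ys (Suc i)" "1 \<le> fX xs ys (Suc i)"
            "\<forall>k. hsum n xs (Suc i) k - hsum n ys i k = (if k \<in> T then 1 else 0)" using B[of "Suc i"] by auto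
      have "xs!Suc i < n" using A1 a6 p_def by auto
      then show ?thesis using a6 good_of[OF T(1) _ T(2) T(3)] T(4) by (auto simp: hX hY)
    qed
  qed
  have edX: "\<forall>i<length xs. (if i = 0 then VA else X (i - 1), xs!i, X i) \<in> E"
  proof (intro allI impI)
    fix i assume "i < length xs"
    then show "(if i = 0 then VA else X (i - 1), xs!i, X i) \<in> E"
      unfolding E_def dgraph_def by (cases i) auto
  qed
  have edY: "\<forall>i<length ys. (if i = 0 then VA else Y (i - 1), ys!i, Y i) \<in> E"
  proof (intro allI impI)
    fix i assume "i < length ys"
    then show "(if i = 0 then VA else Y (i - 1), ys!i, Y i) \<in> E"
      unfolding E_def dgraph_def by (cases i) auto
  qed
  have hce: "\<And>Z zs m. h VA = (\<lambda>_. 0) \<Longrightarrow> (\<forall>i. h (Z i) = hsum n zs i) \<Longrightarrow>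
       h (chain_end Z m) k = (\<Sum>j<m. omega n (zs!j) k)" for k
    by (case_tac m) (auto simp: chain_end_def hsum_def)
  have GX: "geodesic n E VA (chain_end X m) (cpm X xs m) \<and> coherent n E VA (chain_end X m)" if "m \<le> p" for m
  proof -
    note cp = cpm_path[OF _ edX, of m n]
    show ?thesis using that p_def
      by (intro geo_coh[OF n0 good]) (auto simp: cp hce[OF hA hX] hA)
  qed
  have GY: "geodesic n E VA (chain_end Y m) (cpm Y ys m) \<and> coherent n E VA (chain_end Y m)" if "m \<le> q" for m
  proof -
    note cp = cpm_path[OF _ edY, of m n]
    show ?thesis using that q_def
      by (intro geo_coh[OF n0 good]) (auto simp: cp hce[OF hA hY] hA)
  qed
  have cpX: "chain_path X xs = cpm X xs p" by (simp add: chain_path_def cpm_def p_def)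
  have cpY: "chain_path Y ys = cpm Y ys q" by (simp add: chain_path_def cpm_def q_def)
  have LX: "\<forall>k. path_len n (chain_path X xs) k = (\<Sum>j<p. omega n (xs!j) k)"
    using cpm_path[OF _ edX, of p n] by (simp add: cpX p_def)
  have LY: "\<forall>k. path_len n (chain_path Y ys) k = (\<Sum>j<q. omega n (ys!j) k)"
    using cpm_path[OF _ edY, of q n] by (simp add: cpY q_def)
  have weqrefl: "weq n f f" for f unfolding weq_def by auto
  have coh: "\<forall>v \<in> {VA} \<union> X ` {..<p} \<union> Y ` {..<q}. coherent n E VA v"
  proof
    fix v assume "v \<in> {VA} \<union> X ` {..<p} \<union> Y ` {..<q}"
    then consider "v = chain_end X 0" | i where "i < p" "v = chain_end X (Suc i)"
      | i where "i < q" "v = chain_end Y (Suc i)"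
      by (auto simp: chain_end_def)
    then show "coherent n E VA v" using GX GY by cases auto
  qed
  show ?thesis
    unfolding Let_def p_def[symmetric] q_def[symmetric] E_def[symmetric]
    using P1 P2 GX[of p] GY[of q] coh weqrefl cpX cpY LX LY
    by (simp add: fun_eq_iff[symmetric])
qed



lemma alt_lists:
  fixes Xs Ys :: "nat set"
  assumes fin: "finite Xs" "finite Ys" and dis: "Xs \<inter> Ys = {}"
    and alt: "\<forall>m < length (sorted_list_of_set (Xs \<union> Ys)).
        (sorted_list_of_set (Xs \<union> Ys) ! m \<in> Xs \<longleftrightarrow> even m)"
  defines "U \<equiv> sorted_list_of_set (Xs \<union> Ys)"
  shows "sorted_list_of_set Xs = map (\<lambda>i. U ! (2*i)) [0..<(length U + 1) div 2]"
    and "sorted_list_of_set Ys = map (\<lambda>i. U ! (2*i+1)) [0..<length U div 2]"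
proof -
  have fU: "finite (Xs \<union> Ys)" using fin by simp
  have sU: "sorted_wrt (<) U" unfolding U_def by simp
  have setU: "set U = Xs \<union> Ys" unfolding U_def using fU by simp
  have lt: "a < b \<Longrightarrow> b < length U \<Longrightarrow> U!a < U!b" for a b
    using sU unfolding sorted_wrt_iff_nth_less by blast
  have alt': "m < length U \<Longrightarrow> (U ! m \<in> Xs \<longleftrightarrow> even m)" for m using alt U_def by blast
  show "sorted_list_of_set Xs = map (\<lambda>i. U ! (2*i)) [0..<(length U + 1) div 2]"
  proof (rule strict_sorted_equal)
    show "sorted_wrt (<) (sorted_list_of_set Xs)" by simp
    show "sorted_wrt (<) (map (\<lambda>i. U ! (2*i)) [0..<(length U + 1) div 2])"
      unfolding sorted_wrt_iff_nth_less by (auto intro!: lt)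
    have "set (map (\<lambda>i. U ! (2*i)) [0..<(length U + 1) div 2]) = set (sorted_list_of_set Xs)"
    proof
      show "set (map (\<lambda>i. U ! (2*i)) [0..<(length U + 1) div 2]) \<subseteq> set (sorted_list_of_set Xs)"
        using fin alt' by auto
      show "set (sorted_list_of_set Xs) \<subseteq> set (map (\<lambda>i. U ! (2*i)) [0..<(length U + 1) div 2])"
      proof
        fix x assume "x \<in> set (sorted_list_of_set Xs)"
        then have x: "x \<in> Xs" using fin by simp
        then obtain m where m: "m < length U" "U!m = x" using setU by (metis UnI1 in_set_conv_nth)
        then have "even m" using alt' x by auto
        then have "m = 2 * (m div 2)" "m div 2 < (length U + 1) div 2" using m by auto
        then show "x \<in> set (map (\<lambda>i. U ! (2*i)) [0..<(length U + 1) div 2])"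
          using m by (auto intro!: image_eqI[of _ _ "m div 2"])
      qed
    qed
    then show "set (sorted_list_of_set Xs) = set (map (\<lambda>i. U ! (2*i)) [0..<(length U + 1) div 2])" by simp
  qed
  show "sorted_list_of_set Ys = map (\<lambda>i. U ! (2*i+1)) [0..<length U div 2]"
  proof (rule strict_sorted_equal)
    show "sorted_wrt (<) (sorted_list_of_set Ys)" by simp
    show "sorted_wrt (<) (map (\<lambda>i. U ! (2*i+1)) [0..<length U div 2])"
      unfolding sorted_wrt_iff_nth_less by (auto intro!: lt)
    have "set (map (\<lambda>i. U ! (2*i+1)) [0..<length U div 2]) = set (sorted_list_of_set Ys)"
    proof
      show "set (map (\<lambda>i. U ! (2*i+1)) [0..<length U div 2]) \<subseteq> set (sorted_list_of_set Ys)"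
      proof
        fix x assume "x \<in> set (map (\<lambda>i. U ! (2*i+1)) [0..<length U div 2])"
        then obtain i where i: "i < length U div 2" "x = U ! (2*i+1)" by auto
        then have "2*i+1 < length U" by auto
        then have "x \<in> Xs \<union> Ys" using i setU nth_mem by blast
        moreover have "x \<notin> Xs" using alt'[OF \<open>2*i+1 < length U\<close>] i by simp
        ultimately have "x \<in> Ys" by blast
        then show "x \<in> set (sorted_list_of_set Ys)" using fin by auto
      qed
      show "set (sorted_list_of_set Ys) \<subseteq> set (map (\<lambda>i. U ! (2*i+1)) [0..<length U div 2])"
      proof
        fix x assume "x \<in> set (sorted_list_of_set Ys)"
        then have x: "x \<in> Ys" using fin by simp
        then obtain m where m: "m < length U" "U!m = x" using setU by (metis UnI2 in_set_conv_nth)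
        then have "odd m" using alt' x dis by auto
        then have "m = 2 * (m div 2) + 1" "m div 2 < length U div 2" using m by presburger+
        then show "x \<in> set (map (\<lambda>i. U ! (2*i+1)) [0..<length U div 2])"
          using m by (auto intro!: image_eqI[of _ _ "m div 2"])
      qed
    qed
    then show "set (sorted_list_of_set Ys) = set (map (\<lambda>i. U ! (2*i+1)) [0..<length U div 2])" by simp
  qed
qed

lemma set_main:
  fixes Xs Ys :: "nat set" and X Y :: "nat \<Rightarrow> vert" and h :: "vert \<Rightarrow> nat \<Rightarrow> int"
  assumes fin: "finite Xs" "finite Ys" and dis: "Xs \<inter> Ys = {}" and sub: "Xs \<union> Ys \<subseteq> {1..n-1}"
    and n0: "0 < n"
    and hA: "h VA = (\<lambda>_. 0)" and hX: "\<forall>i. h (X i) = hsum n (sorted_list_of_set Xs) i"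
    and hY: "\<forall>i. h (Y i) = hsum n (sorted_list_of_set Ys) i"
  shows "(\<forall>m < length (sorted_list_of_set (Xs \<union> Ys)).
        (sorted_list_of_set (Xs \<union> Ys) ! m \<in> Xs \<longleftrightarrow> even m)) \<longrightarrow>
    (let xs = sorted_list_of_set Xs; ys = sorted_list_of_set Ys;
         p = length xs; q = length ys; E = dgraph X Y xs ys in
      (\<forall>i<p. 0 < fX xs ys i \<and> fX xs ys i \<le> int (xs ! i) \<and> fX xs ys i \<in> {1..int n - 1}) \<and>
      (\<forall>i<q. 0 < fY xs ys i \<and> fY xs ys i < int (ys ! i) \<and> fY xs ys i \<in> {1..int n - 1}) \<and>
      geodesic n E VA (chain_end X p) (chain_path X xs) \<and>
      weq n (path_len n (chain_path X xs)) (\<lambda>i. \<Sum>j<p. omega n (xs ! j) i) \<and>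
      geodesic n E VA (chain_end Y q) (chain_path Y ys) \<and>
      weq n (path_len n (chain_path Y ys)) (\<lambda>i. \<Sum>j<q. omega n (ys ! j) i) \<and>
      (\<forall>v \<in> {VA} \<union> X ` {..<p} \<union> Y ` {..<q}. coherent n E VA v))"
proof
  assume alt: "\<forall>m < length (sorted_list_of_set (Xs \<union> Ys)).
        (sorted_list_of_set (Xs \<union> Ys) ! m \<in> Xs \<longleftrightarrow> even m)"
  define U where "U = sorted_list_of_set (Xs \<union> Ys)"
  define xs where "xs = sorted_list_of_set Xs"
  define ys where "ys = sorted_list_of_set Ys"
  have xsU: "xs = map (\<lambda>i. U ! (2*i)) [0..<(length U + 1) div 2]"
    using alt_lists(1)[OF fin dis alt] unfolding xs_def U_def .
  have ysU: "ys = map (\<lambda>i. U ! (2*i+1)) [0..<length U div 2]"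
    using alt_lists(2)[OF fin dis alt] unfolding ys_def U_def .
  have sU: "sorted_wrt (<) U" unfolding U_def by simp
  have lt: "a < b \<Longrightarrow> b < length U \<Longrightarrow> U!a < U!b" for a b
    using sU unfolding sorted_wrt_iff_nth_less by blast
  have A1: "\<forall>i<length xs. 1 \<le> xs!i \<and> xs!i < n"
  proof (intro allI impI)
    fix i assume "i < length xs"
    then have "xs!i \<in> Xs" unfolding xs_def using fin nth_mem by (metis set_sorted_list_of_set)
    then show "1 \<le> xs!i \<and> xs!i < n" using sub n0 by force
  qed
  have A2: "\<forall>i<length ys. ys!i < n"
  proof (intro allI impI)
    fix i assume "i < length ys"
    then have "ys!i \<in> Ys" unfolding ys_def using fin nth_mem by (metis set_sorted_list_of_set)
    then show "ys!i < n" using sub n0 by force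
  qed
  have A3: "\<forall>i<length ys. xs!i < ys!i" unfolding xsU ysU by (auto intro!: lt)
  have A4: "\<forall>i. Suc i < length xs \<longrightarrow> i < length ys \<and> ys!i < xs!(Suc i)"
    unfolding xsU ysU by (auto intro!: lt)
  have A5: "length ys \<le> length xs" unfolding xsU ysU by simp
  have hX': "\<forall>i. h (X i) = hsum n xs i" using hX xs_def by simp
  have hY': "\<forall>i. h (Y i) = hsum n ys i" using hY ys_def by simp
  show "let xs = sorted_list_of_set Xs; ys = sorted_list_of_set Ys;
         p = length xs; q = length ys; E = dgraph X Y xs ys in
      (\<forall>i<p. 0 < fX xs ys i \<and> fX xs ys i \<le> int (xs ! i) \<and> fX xs ys i \<in> {1..int n - 1}) \<and>
      (\<forall>i<q. 0 < fY xs ys i \<and> fY xs ys i < int (ys ! i) \<and> fY xs ys i \<in> {1..int n - 1}) \<and>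
      geodesic n E VA (chain_end X p) (chain_path X xs) \<and>
      weq n (path_len n (chain_path X xs)) (\<lambda>i. \<Sum>j<p. omega n (xs ! j) i) \<and>
      geodesic n E VA (chain_end Y q) (chain_path Y ys) \<and>
      weq n (path_len n (chain_path Y ys)) (\<lambda>i. \<Sum>j<q. omega n (ys ! j) i) \<and>
      (\<forall>v \<in> {VA} \<union> X ` {..<p} \<union> Y ` {..<q}. coherent n E VA v)"
    using list_main[OF A1 A2 A3 A4 A5 n0 hA hX' hY'] unfolding xs_def ys_def Let_def .
qed

theorem mainTheorem2:
  fixes n k :: nat and c :: "nat \<Rightarrow> int"
  assumes "0 < k" and "k < n"
    and "\<forall>j\<in>{1..n}. c j \<in> {0, 1}"
    and "card {j\<in>{1..n}. c j = 1} = k"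
  defines "Rs \<equiv> {j\<in>{1..n-1}. c j - c (Suc j) = 1}"
    and "Ls \<equiv> {j\<in>{1..n-1}. c j - c (Suc j) = -1}"
  shows "\<forall>(Xs, Ys, X, Y) \<in> {(Rs, Ls, VR, VL), (Ls, Rs, VL, VR)}.
    (\<forall>m < length (sorted_list_of_set (Xs \<union> Ys)).
        (sorted_list_of_set (Xs \<union> Ys) ! m \<in> Xs \<longleftrightarrow> even m)) \<longrightarrow>
    (let xs = sorted_list_of_set Xs; ys = sorted_list_of_set Ys;
         p = length xs; q = length ys; E = dgraph X Y xs ys in
      (\<forall>i<p. 0 < fX xs ys i \<and> fX xs ys i \<le> int (xs ! i) \<and> fX xs ys i \<in> {1..int n - 1}) \<and>
      (\<forall>i<q. 0 < fY xs ys i \<and> fY xs ys i < int (ys ! i) \<and> fY xs ys i \<in> {1..int n - 1}) \<and>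
      geodesic n E VA (chain_end X p) (chain_path X xs) \<and>
      weq n (path_len n (chain_path X xs)) (\<lambda>i. \<Sum>j<p. omega n (xs ! j) i) \<and>
      geodesic n E VA (chain_end Y q) (chain_path Y ys) \<and>
      weq n (path_len n (chain_path Y ys)) (\<lambda>i. \<Sum>j<q. omega n (ys ! j) i) \<and>
      (\<forall>v \<in> {VA} \<union> X ` {..<p} \<union> Y ` {..<q}. coherent n E VA v))"
  proof -
  have n0: "0 < n" using assms(1,2) by simp
  have finR: "finite Rs" unfolding Rs_def by simp
  have finL: "finite Ls" unfolding Ls_def by simp
  have dis: "Rs \<inter> Ls = {}" unfolding Rs_def Ls_def by auto
  have sub: "Rs \<union> Ls \<subseteq> {1..n-1}" unfolding Rs_def Ls_def by auto
  define h1 where "h1 = (\<lambda>v. case v of VA \<Rightarrow> (\<lambda>_. 0) | VR i \<Rightarrow> hsum n (sorted_list_of_set Rs) i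
                                  | VL i \<Rightarrow> hsum n (sorted_list_of_set Ls) i)"
  define h2 where "h2 = (\<lambda>v. case v of VA \<Rightarrow> (\<lambda>_. 0) | VR i \<Rightarrow> hsum n (sorted_list_of_set Rs) i
                                  | VL i \<Rightarrow> hsum n (sorted_list_of_set Ls) i)"
  note r1 = set_main[OF finR finL dis sub n0, of h1 VR VL]
  have dis2: "Ls \<inter> Rs = {}" using dis by blast
  have sub2: "Ls \<union> Rs \<subseteq> {1..n-1}" using sub by blast
  note r2 = set_main[OF finL finR dis2 sub2 n0, of h2 VL VR]
  show ?thesis using r1 r2 by (simp add: h1_def h2_def)
qed

end
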